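(* Let $H$ be a finite group of odd order with $d(H)=2$. Then $\mathsf{GEN}(\mathbb{Z}_2^2\times H)=*1$.
   Context: For a finite group $G$, $\mathsf{GEN}(G)$ is the following impartial two-player game. A position is a set of elements selected so far; the starting position is $\emptyset$. From a position $P$ with $\langle P\rangle\neq G$, the player to move selects some $g\in G\setminus P$, producing the position $P\cup\{g\}$ (these are the options of $P$); a position $P$ with $\langle P\rangle = G$ has no options. The nim-number of a position is defined recursively by $\operatorname{nim}(P)=\operatorname{mex}\{\operatorname{nim}(Q): Q \text{ an option of } P\}$, where $\operatorname{mex}(A)$ is the least nonnegative integer not in $A$. We write $\mathsf{GEN}(G)=*n$ if $\operatorname{nim}(\emptyset)=n$. $d(G)$ denotes the minimum size of a generating set of $G$; $\mathbb{Z}_2^2=\mathbb{Z}_2\times\mathbb{Z}_2$. *)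

theory Defs
  imports "HOL-Algebra.Algebra"
begin

definition mex :: "nat set \<Rightarrow> nat" where
  "mex A = (LEAST n. n \<notin> A)"

text \<open>Nim-number of position P in GEN(G), by recursion with fuel k; positions are
  subsets of the carrier, and from P each move adds an element of carrier G - P,
  so the recursion depth is bounded by card (carrier G - P).\<close>
fun gen_nim_aux :: "('a, 'b) monoid_scheme \<Rightarrow> nat \<Rightarrow> 'a set \<Rightarrow> nat" where
  "gen_nim_aux G 0 P = 0"
| "gen_nim_aux G (Suc k) P =
     (if generate G P = carrier G then 0
      else mex ((\<lambda>g. gen_nim_aux G k (insert g P)) ` (carrier G - P)))"

definition gen_nim :: "('a, 'b) monoid_scheme \<Rightarrow> 'a set \<Rightarrow> nat" where
  "gen_nim G P = gen_nim_aux G (card (carrier G - P)) P"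

text \<open>GEN(G) = *n  iff  nim(empty) = n.\<close>
definition GEN_value :: "('a, 'b) monoid_scheme \<Rightarrow> nat" where
  "GEN_value G = gen_nim G {}"

definition min_gens :: "('a, 'b) monoid_scheme \<Rightarrow> nat" where
  "min_gens G = (LEAST n. \<exists>S. S \<subseteq> carrier G \<and> finite S \<and> card S = n \<and> generate G S = carrier G)"

end

theory Submission
  imports Defs
begin

lemma mex_0: "0 \<notin> A \<Longrightarrow> mex A = 0"
  unfolding mex_def by (rule Least_equality) auto

lemma mex_1: "0 \<in> A \<Longrightarrow> 1 \<notin> A \<Longrightarrow> mex A = 1"
  unfolding mex_def by (rule Least_equality) (auto, metis Suc_leI gr0I)

lemma mex_2: "0 \<in> A \<Longrightarrow> 1 \<in> A \<Longrightarrow> 2 \<notin> A \<Longrightarrow> mex A = 2"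
  unfolding mex_def apply (rule Least_equality) apply simp
  by (metis One_nat_def less_2_cases not_less)

lemma mex_not: "finite A \<Longrightarrow> n \<in> A \<Longrightarrow> mex A \<noteq> n"
proof -
  assume f: "finite A" and n: "n \<in> A"
  have "\<exists>m. m \<notin> A" using f by (meson ex_new_if_finite infinite_UNIV_nat)
  then have "mex A \<notin> A" unfolding mex_def by (rule LeastI_ex)
  with n show ?thesis by auto
qed

lemma gen_nim_eq:
  assumes "group G" "finite (carrier G)" "P \<subseteq> carrier G"
  shows "gen_nim G P = (if generate G P = carrier G then 0
           else mex ((\<lambda>g. gen_nim G (insert g P)) ` (carrier G - P)))"
proof (cases "P = carrier G")
  case True
  have "generate G P = carrier G"
    using group.generate_incl[OF assms(1)] generate.incl[of _ P G] True by blast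
  then show ?thesis using True by (simp add: gen_nim_def)
next
  case False
  have ne: "carrier G - P \<noteq> {}" using False assms(3) by blast
  define k where "k = card (carrier G - P) - 1"
  have k: "card (carrier G - P) = Suc k"
    unfolding k_def using ne assms(2) by (simp add: card_gt_0_iff)
  have kk: "\<And>g. g \<in> carrier G - P \<Longrightarrow> card (carrier G - insert g P) = k"
  proof -
    fix g assume g: "g \<in> carrier G - P"
    have "carrier G - insert g P = (carrier G - P) - {g}" by blast
    then show "card (carrier G - insert g P) = k" using g k assms(2) by simp
  qed
  have img: "(\<lambda>g. gen_nim_aux G k (insert g P)) ` (carrier G - P)
     = (\<lambda>g. gen_nim G (insert g P)) ` (carrier G - P)"
  proof (rule image_cong)
    fix g assume g: "g \<in> carrier G - P"
    show "gen_nim_aux G k (insert g P) = gen_nim G (insert g P)"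
      unfolding gen_nim_def kk[OF g] ..
  qed simp
  have "gen_nim G P = gen_nim_aux G (Suc k) P" unfolding gen_nim_def k ..
  also have "\<dots> = (if generate G P = carrier G then 0
           else mex ((\<lambda>g. gen_nim_aux G k (insert g P)) ` (carrier G - P)))"
    by (simp only: gen_nim_aux.simps)
  finally show ?thesis unfolding img .
qed

abbreviation ZZ :: "(int \<times> int) monoid" where
  "ZZ \<equiv> integer_mod_group 2 \<times>\<times> integer_mod_group 2"

lemma carrier_Z2: "carrier (integer_mod_group 2) = {0,1}"
  by (auto simp: carrier_integer_mod_group)

lemma carrier_ZZ: "carrier ZZ = {0,1} \<times> {0,1}"
  by (simp add: carrier_Z2)

lemma group_ZZ: "group ZZ" by (simp add: DirProd_group)

lemma DirProd_pow: "(a, b) [^]\<^bsub>G \<times>\<times> K\<^esub> (n::nat) = (a [^]\<^bsub>G\<^esub> n, b [^]\<^bsub>K\<^esub> n)"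
  by (induction n) auto

lemma odd_mod2: "odd m \<Longrightarrow> a \<in> {0::int, 1} \<Longrightarrow> (int m * a) mod 2 = a"
  by (auto elim!: oddE)

lemma ZZ_cases: "z \<in> carrier ZZ \<Longrightarrow> z = (0,0) \<or> z = (0,1) \<or> z = (1,0) \<or> z = (1,1)"
  by (auto simp: carrier_Z2)

lemma ZZ_pow_odd: "z \<in> carrier ZZ \<Longrightarrow> odd m \<Longrightarrow> z [^]\<^bsub>ZZ\<^esub> (m::nat) = z"
proof -
  assume z: "z \<in> carrier ZZ" and m: "odd m"
  obtain a b where ab: "z = (a,b)" "a \<in> {0,1}" "b \<in> {0,1}" using z by (cases z) (auto simp: carrier_Z2)
  show ?thesis using ab odd_mod2[OF m] by (simp add: DirProd_pow)
qed

lemma ZZ_inv: "z \<in> carrier ZZ \<Longrightarrow> inv\<^bsub>ZZ\<^esub> z = z"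
  apply (frule ZZ_cases)
  apply (elim disjE)
  apply (simp_all add: carrier_Z2)
  done

lemma ZZ_mult2: "z0 \<in> carrier ZZ \<Longrightarrow> h1 \<in> {(0,0), z0} \<Longrightarrow> h2 \<in> {(0,0), z0} \<Longrightarrow> h1 \<otimes>\<^bsub>ZZ\<^esub> h2 \<in> {(0,0), z0}"
  apply (drule ZZ_cases)
  apply (elim disjE)
  apply auto
  done

lemma ZZ_sub2:
  assumes "S \<subseteq> {\<one>\<^bsub>ZZ\<^esub>, z0}" "z0 \<in> carrier ZZ"
  shows "generate ZZ S \<subseteq> {(0,0), z0}"
proof
  fix w assume "w \<in> generate ZZ S"
  then show "w \<in> {(0,0), z0}" using assms
  proof induction
    case one then show ?case by simp
  next
    case (incl h) then show ?case by auto
  next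
    case (inv h)
    then have "h \<in> {(0,0), z0}" by auto
    moreover then have "h \<in> carrier ZZ" using inv(3) by (auto simp: carrier_Z2)
    ultimately show ?case by (simp add: ZZ_inv)
  next
    case (eng h1 h2) then show ?case using ZZ_mult2 by blast
  qed
qed

lemma ZZ_not_gen:
  assumes "S \<subseteq> {\<one>\<^bsub>ZZ\<^esub>, z0}" "z0 \<in> carrier ZZ"
  shows "generate ZZ S \<noteq> carrier ZZ"
proof
  assume e: "generate ZZ S = carrier ZZ"
  have c: "(1,0) \<in> carrier ZZ" "(0,1) \<in> carrier ZZ" by (auto simp: carrier_Z2)
  have sub: "carrier ZZ \<subseteq> {(0,0), z0}" using ZZ_sub2[OF assms] e by (simp only:)
  have "(1,0) \<in> {(0,0),z0}" by (rule subsetD[OF sub c(1)])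
  moreover have "(0,1) \<in> {(0,0),z0}" by (rule subsetD[OF sub c(2)])
  ultimately have "((1::int),(0::int)) = (0,1)" by simp
  then show False by simp
qed

lemma ZZ_four: "z1 \<in> carrier ZZ \<Longrightarrow> z2 \<in> carrier ZZ \<Longrightarrow> w \<in> carrier ZZ \<Longrightarrow> z1 \<noteq> (0,0) \<Longrightarrow> z2 \<noteq> (0,0) \<Longrightarrow> z1 \<noteq> z2
  \<Longrightarrow> w = (0,0) \<or> w = z1 \<or> w = z2 \<or> w = z1 \<otimes>\<^bsub>ZZ\<^esub> z2"
  apply (drule ZZ_cases)+
  apply (elim disjE)
  apply simp_all
  done

lemma ZZ_gen:
  assumes "z1 \<in> carrier ZZ" "z2 \<in> carrier ZZ" "z1 \<noteq> \<one>\<^bsub>ZZ\<^esub>" "z2 \<noteq> \<one>\<^bsub>ZZ\<^esub>" "z1 \<noteq> z2"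
    "z1 \<in> S" "z2 \<in> S" "S \<subseteq> carrier ZZ"
  shows "generate ZZ S = carrier ZZ"
proof
  show "generate ZZ S \<subseteq> carrier ZZ" using group.generate_incl[OF group_ZZ assms(8)] .
  show "carrier ZZ \<subseteq> generate ZZ S"
  proof
    fix w assume w: "w \<in> carrier ZZ"
    have g1: "z1 \<in> generate ZZ S" "z2 \<in> generate ZZ S" using assms generate.incl by metis+
    have g3: "z1 \<otimes>\<^bsub>ZZ\<^esub> z2 \<in> generate ZZ S" using generate.eng[OF g1] .
    have g0: "(0,0) \<in> generate ZZ S" using generate.one[of ZZ S] by simp
    have "w = (0,0) \<or> w = z1 \<or> w = z2 \<or> w = z1 \<otimes>\<^bsub>ZZ\<^esub> z2"
      using ZZ_four[OF assms(1,2) w] assms(3-5) by simp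
    then show "w \<in> generate ZZ S" using g1 g3 g0 by auto
  qed
qed

lemma ZZ_other: "z0 \<in> carrier ZZ \<Longrightarrow> \<exists>z. z \<in> carrier ZZ \<and> z \<noteq> (0,0) \<and> z \<noteq> z0"
proof -
  assume "z0 \<in> carrier ZZ"
  have c: "(1,0) \<in> carrier ZZ" "(0,1) \<in> carrier ZZ" by (auto simp: carrier_Z2)
  show ?thesis
  proof (cases "z0 = (1,0)")
    case True then show ?thesis using c by (intro exI[of _ "(0,1)"]) auto
  next
    case False then show ?thesis using c by (intro exI[of _ "(1,0)"]) auto
  qed
qed

lemma card_ZZ: "card (carrier ZZ) = 4"
  by (simp add: carrier_Z2)

locale gsetup =
  fixes H :: "('a, 'b) monoid_scheme" and x y :: 'a
  assumes grpH: "group H" and finH: "finite (carrier H)" and oddH: "odd (card (carrier H))"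
    and xH: "x \<in> carrier H" and yH: "y \<in> carrier H" and gxy: "generate H {x,y} = carrier H"
begin

abbreviation GG where "GG \<equiv> ZZ \<times>\<times> H"

definition Hc where "Hc P \<longleftrightarrow> generate H (snd ` P) = carrier H"
definition Zc where "Zc P \<longleftrightarrow> generate ZZ (fst ` P) = carrier ZZ"
definition tt where "tt P \<longleftrightarrow> (\<exists>h\<in>carrier H. generate H (insert h (snd ` P)) = carrier H)"
definition nonone where "nonone P \<longleftrightarrow> (\<exists>g\<in>P. fst g \<noteq> (0,0))"
definition trm where "trm P \<longleftrightarrow> generate GG P = carrier GG"

lemma grpG: "group GG" by (simp add: DirProd_group group_ZZ grpH)
lemma finG: "finite (carrier GG)" using finH by (simp add: carrier_Z2)

lemma genH_sub: "S \<subseteq> carrier H \<Longrightarrow> generate H S \<subseteq> carrier H"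
  by (rule group.generate_incl[OF grpH])

lemma genH_full: "generate H S = carrier H \<Longrightarrow> S \<subseteq> S' \<Longrightarrow> S' \<subseteq> carrier H \<Longrightarrow> generate H S' = carrier H"
proof -
  assume a: "generate H S = carrier H" "S \<subseteq> S'" "S' \<subseteq> carrier H"
  have "generate H S \<subseteq> generate H S'" by (rule group.mono_generate[OF grpH a(2)])
  with a(1) genH_sub[OF a(3)] show ?thesis by (rule_tac equalityI) simp_all
qed

lemma genH_xy: "x \<in> generate H S \<Longrightarrow> y \<in> generate H S \<Longrightarrow> S \<subseteq> carrier H \<Longrightarrow> generate H S = carrier H"
proof -
  assume a: "x \<in> generate H S" "y \<in> generate H S" "S \<subseteq> carrier H"
  have sg: "subgroup (generate H S) H" by (rule group.generate_is_subgroup[OF grpH a(3)])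
  have "{x,y} \<subseteq> generate H S" using a(1,2) by simp
  then have "generate H {x,y} \<subseteq> generate H S"
    by (rule group.generate_subgroup_incl[OF grpH _ sg])
  then have "carrier H \<subseteq> generate H S" by (simp only: gxy)
  with genH_sub[OF a(3)] show ?thesis by (rule_tac equalityI) simp_all
qed

lemma genH_absorb: "h \<in> generate H S \<Longrightarrow> S \<subseteq> carrier H \<Longrightarrow> generate H (insert h S) = generate H S"
proof -
  assume a: "h \<in> generate H S" "S \<subseteq> carrier H"
  have sg: "subgroup (generate H S) H" by (rule group.generate_is_subgroup[OF grpH a(2)])
  have "S \<subseteq> generate H S" using generate.incl[of _ S H] by (rule subsetI)
  then have "insert h S \<subseteq> generate H S" using a(1) by (rule_tac insert_subsetI) simp_all
  then have "generate H (insert h S) \<subseteq> generate H S"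
    by (rule group.generate_subgroup_incl[OF grpH _ sg])
  moreover have "generate H S \<subseteq> generate H (insert h S)" by (rule group.mono_generate[OF grpH]) (rule subset_insertI)
  ultimately show ?thesis by (rule equalityI)
qed

lemmas monH = group.is_monoid[OF grpH]
lemmas monZ = group.is_monoid[OF group_ZZ]

lemma oneH: "\<one>\<^bsub>H\<^esub> \<in> carrier H" by (rule monoid.one_closed[OF group.is_monoid[OF grpH]])
lemma oneZ: "\<one>\<^bsub>ZZ\<^esub> \<in> carrier ZZ" by (rule monoid.one_closed[OF group.is_monoid[OF group_ZZ]])

lemma carrGG: "g \<in> carrier GG \<Longrightarrow> fst g \<in> carrier ZZ \<and> snd g \<in> carrier H"
  by (simp only: carrier_DirProd[of ZZ H] mem_Times_iff)

lemma gen_snd: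
  assumes "P \<subseteq> carrier GG" "a \<in> generate GG P"
  shows "snd a \<in> generate H (snd ` P)"
  using assms(2)
proof induction
  case one then show ?case using generate.one[of H] by simp
next
  case (incl h) then show ?case using generate.incl[of _ "snd ` P" H] by blast
next
  case (inv h)
  then have "h \<in> carrier GG" using assms(1) by blast
  then obtain a b where ab: "h = (a,b)" "a \<in> carrier ZZ" "b \<in> carrier H" using carrGG by (metis prod.collapse)
  then have "inv\<^bsub>GG\<^esub> h = (inv\<^bsub>ZZ\<^esub> a, inv\<^bsub>H\<^esub> b)" using inv_DirProd[OF group_ZZ grpH] by simp
  moreover have "b \<in> snd ` P" using inv ab by force
  ultimately show ?case using generate.inv[of b "snd ` P" H] by simp
next
  case (eng h1 h2) then show ?case using generate.eng[of _ H "snd ` P"] by (simp add: mult_DirProd')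
qed

lemma gen_fst:
  assumes "P \<subseteq> carrier GG" "a \<in> generate GG P"
  shows "fst a \<in> generate ZZ (fst ` P)"
  using assms(2)
proof induction
  case one then show ?case using generate.one[of ZZ] by simp
next
  case (incl h) then show ?case using generate.incl[of _ "fst ` P" ZZ] by blast
next
  case (inv h)
  then have "h \<in> carrier GG" using assms(1) by blast
  then obtain a b where ab: "h = (a,b)" "a \<in> carrier ZZ" "b \<in> carrier H" using carrGG by (metis prod.collapse)
  then have "inv\<^bsub>GG\<^esub> h = (inv\<^bsub>ZZ\<^esub> a, inv\<^bsub>H\<^esub> b)" using inv_DirProd[OF group_ZZ grpH] by simp
  moreover have "a \<in> fst ` P" using inv ab by force
  ultimately show ?case using generate.inv[of a "fst ` P" ZZ] by simp
next
  case (eng h1 h2) then show ?case using generate.eng[of _ ZZ "fst ` P"] by (simp add: mult_DirProd')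
qed

lemma term_Hc: "P \<subseteq> carrier GG \<Longrightarrow> trm P \<Longrightarrow> Hc P"
proof -
  assume P: "P \<subseteq> carrier GG" and t: "trm P"
  have "carrier H \<subseteq> generate H (snd ` P)"
  proof
    fix h assume "h \<in> carrier H"
    then have "((0,0), h) \<in> generate GG P" using t by (simp add: trm_def carrier_Z2)
    then show "h \<in> generate H (snd ` P)" using gen_snd[OF P] by fastforce
  qed
  moreover have "snd ` P \<subseteq> carrier H" using P by auto
  ultimately show ?thesis unfolding Hc_def using genH_sub by blast
qed

lemma term_Zc: "P \<subseteq> carrier GG \<Longrightarrow> trm P \<Longrightarrow> Zc P"
proof -
  assume P: "P \<subseteq> carrier GG" and t: "trm P"
  have "carrier ZZ \<subseteq> generate ZZ (fst ` P)"
  proof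
    fix z assume "z \<in> carrier ZZ"
    then have "(z, \<one>\<^bsub>H\<^esub>) \<in> generate GG P" using t oneH by (simp add: trm_def)
    then show "z \<in> generate ZZ (fst ` P)" using gen_fst[OF P] by fastforce
  qed
  moreover have "fst ` P \<subseteq> carrier ZZ" using P by auto
  ultimately show ?thesis unfolding Zc_def using group.generate_incl[OF group_ZZ] by blast
qed

lemma gen_pow: "a \<in> generate GG P \<Longrightarrow> a [^]\<^bsub>GG\<^esub> (n::nat) \<in> generate GG P"
proof (induction n)
  case 0 show ?case using generate.one[of GG P] by (simp only: nat_pow_0)
next
  case (Suc n) then show ?case using generate.eng[OF Suc.IH Suc.prems] by (simp only: nat_pow_Suc)
qed

lemma term_suff:
  assumes P: "P \<subseteq> carrier GG" and z: "Zc P" and h: "Hc P"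
  shows "trm P"
proof -
  let ?L = "generate GG P"
  have Lsub: "subgroup ?L GG" by (rule group.generate_is_subgroup[OF grpG P])
  have key: "\<And>z h. (z,h) \<in> P \<Longrightarrow> (z, \<one>\<^bsub>H\<^esub>) \<in> ?L \<and> (\<one>\<^bsub>ZZ\<^esub>, h) \<in> ?L"
  proof -
    fix z h assume zh: "(z,h) \<in> P"
    then have zc: "z \<in> carrier ZZ" and hc: "h \<in> carrier H" using P by auto
    have "(z,h) [^]\<^bsub>GG\<^esub> card (carrier H) \<in> ?L" using gen_pow generate.incl[OF zh] by blast
    moreover have "(z,h) [^]\<^bsub>GG\<^esub> card (carrier H) = (z, \<one>\<^bsub>H\<^esub>)"
      using ZZ_pow_odd[OF zc oddH] group.pow_order_eq_1[OF grpH hc] by (simp add: DirProd_pow order_def)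
    ultimately have z1: "(z, \<one>\<^bsub>H\<^esub>) \<in> ?L" by simp
    have "inv\<^bsub>GG\<^esub> (z, \<one>\<^bsub>H\<^esub>) \<otimes>\<^bsub>GG\<^esub> (z,h) \<in> ?L"
      using subgroup.m_closed[OF Lsub subgroup.m_inv_closed[OF Lsub z1] generate.incl[OF zh]] .
    moreover have "inv\<^bsub>GG\<^esub> (z, \<one>\<^bsub>H\<^esub>) \<otimes>\<^bsub>GG\<^esub> (z,h) = (\<one>\<^bsub>ZZ\<^esub>, h)"
      using zc hc inv_DirProd[OF group_ZZ grpH zc oneH]
      by (simp add: group.l_inv[OF group_ZZ] monoid.inv_one[OF monH] monoid.l_one[OF monH])
    ultimately show "(z, \<one>\<^bsub>H\<^esub>) \<in> ?L \<and> (\<one>\<^bsub>ZZ\<^esub>, h) \<in> ?L" using z1 by simp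
  qed
  have A: "\<And>h. h \<in> generate H (snd ` P) \<Longrightarrow> (\<one>\<^bsub>ZZ\<^esub>, h) \<in> ?L"
  proof -
    fix h assume "h \<in> generate H (snd ` P)"
    then show "(\<one>\<^bsub>ZZ\<^esub>, h) \<in> ?L"
    proof induction
      case one then show ?case using generate.one[of GG P] by simp
    next
      case (incl h) then show ?case using key by force
    next
      case (inv h)
      then obtain z where zh: "(z,h) \<in> P" by force
      then have hc: "h \<in> carrier H" using P by auto
      have "inv\<^bsub>GG\<^esub> (\<one>\<^bsub>ZZ\<^esub>, h) \<in> ?L" using subgroup.m_inv_closed[OF Lsub] key[OF zh] by blast
      then show ?case using inv_DirProd[OF group_ZZ grpH oneZ hc]
        by (simp add: monoid.inv_one[OF monZ])
    next
      case (eng h1 h2)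
      then show ?case using subgroup.m_closed[OF Lsub eng.IH] by (simp add: monoid.l_one[OF monZ oneZ] del: one_DirProd)
    qed
  qed
  have B: "\<And>z. z \<in> generate ZZ (fst ` P) \<Longrightarrow> (z, \<one>\<^bsub>H\<^esub>) \<in> ?L"
  proof -
    fix z assume "z \<in> generate ZZ (fst ` P)"
    then show "(z, \<one>\<^bsub>H\<^esub>) \<in> ?L"
    proof induction
      case one then show ?case using generate.one[of GG P] by simp
    next
      case (incl z) then show ?case using key by force
    next
      case (inv z)
      then obtain h where zh: "(z,h) \<in> P" by force
      then have zc: "z \<in> carrier ZZ" using P by auto
      have "inv\<^bsub>GG\<^esub> (z, \<one>\<^bsub>H\<^esub>) \<in> ?L" using subgroup.m_inv_closed[OF Lsub] key[OF zh] by blast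
      then show ?case using inv_DirProd[OF group_ZZ grpH zc oneH]
        by (simp add: monoid.inv_one[OF monH])
    next
      case (eng h1 h2)
      then show ?case using subgroup.m_closed[OF Lsub eng.IH] by (simp add: monoid.l_one[OF monH oneH])
    qed
  qed
  have "carrier GG \<subseteq> ?L"
  proof
    fix g assume g: "g \<in> carrier GG"
    obtain z h where zh: "g = (z,h)" "z \<in> carrier ZZ" "h \<in> carrier H" using g by auto
    have "(z, \<one>\<^bsub>H\<^esub>) \<otimes>\<^bsub>GG\<^esub> (\<one>\<^bsub>ZZ\<^esub>, h) \<in> ?L"
      using subgroup.m_closed[OF Lsub B A] z h zh unfolding Zc_def Hc_def by blast
    then show "g \<in> ?L" using zh
      by (simp add: monoid.r_one[OF monZ] monoid.l_one[OF monH] del: one_DirProd)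
  qed
  then show ?thesis unfolding trm_def using group.generate_incl[OF grpG P] by blast
qed

lemma term_iff: "P \<subseteq> carrier GG \<Longrightarrow> trm P \<longleftrightarrow> Zc P \<and> Hc P"
  using term_suff term_Hc term_Zc by blast

end

context gsetup begin

lemma zeroZ: "(0,0) \<in> carrier ZZ" by (simp add: carrier_Z2)
lemma oneZ0: "\<one>\<^bsub>ZZ\<^esub> = (0,0)" by simp

lemma finP: "P \<subseteq> carrier GG \<Longrightarrow> finite P" using finG finite_subset by blast

lemma nim_eq: "P \<subseteq> carrier GG \<Longrightarrow> \<not> trm P \<Longrightarrow>
   gen_nim GG P = mex ((\<lambda>g. gen_nim GG (insert g P)) ` (carrier GG - P))"
  using gen_nim_eq[OF grpG finG] unfolding trm_def by simp

lemma nim_term: "P \<subseteq> carrier GG \<Longrightarrow> trm P \<Longrightarrow> gen_nim GG P = 0"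
  using gen_nim_eq[OF grpG finG] unfolding trm_def by simp

lemma snd_sub: "P \<subseteq> carrier GG \<Longrightarrow> snd ` P \<subseteq> carrier H" using carrGG by blast
lemma fst_sub: "P \<subseteq> carrier GG \<Longrightarrow> fst ` P \<subseteq> carrier ZZ" using carrGG by blast

lemma tt_mono: "P \<subseteq> Q \<Longrightarrow> Q \<subseteq> carrier GG \<Longrightarrow> tt P \<Longrightarrow> tt Q"
proof -
  assume a: "P \<subseteq> Q" "Q \<subseteq> carrier GG" "tt P"
  then obtain h where h: "h \<in> carrier H" "generate H (insert h (snd ` P)) = carrier H" unfolding tt_def by blast
  have "insert h (snd ` Q) \<subseteq> carrier H" using h(1) snd_sub[OF a(2)] by blast
  moreover have "insert h (snd ` P) \<subseteq> insert h (snd ` Q)" using a(1) by blast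
  ultimately have "generate H (insert h (snd ` Q)) = carrier H" using genH_full[OF h(2)] by blast
  then show ?thesis unfolding tt_def using h(1) by blast
qed

lemma tt_of_trm: "g \<in> carrier GG \<Longrightarrow> P \<subseteq> carrier GG \<Longrightarrow> trm (insert g P) \<Longrightarrow> tt P"
proof -
  assume a: "g \<in> carrier GG" "P \<subseteq> carrier GG" "trm (insert g P)"
  have "Hc (insert g P)" using term_Hc[OF _ a(3)] a(1,2) by blast
  then have "generate H (insert (snd g) (snd ` P)) = carrier H" unfolding Hc_def by simp
  moreover have "snd g \<in> carrier H" using carrGG[OF a(1)] by blast
  ultimately show ?thesis unfolding tt_def by blast
qed

lemma Hc_tt: "P \<subseteq> carrier GG \<Longrightarrow> Hc P \<Longrightarrow> tt P"
proof -
  assume a: "P \<subseteq> carrier GG" "Hc P"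
  have "generate H (insert x (snd ` P)) = carrier H"
    using genH_full[OF a(2)[unfolded Hc_def], of "insert x (snd ` P)"] xH snd_sub[OF a(1)] by blast
  then show ?thesis unfolding tt_def using xH by blast
qed

lemma notZc_sub: "P \<subseteq> carrier GG \<Longrightarrow> \<not> Zc P \<Longrightarrow> g0 \<in> P \<Longrightarrow> fst g0 \<noteq> (0,0) \<Longrightarrow> fst ` P \<subseteq> {(0,0), fst g0}"
proof
  fix z assume a: "P \<subseteq> carrier GG" "\<not> Zc P" "g0 \<in> P" "fst g0 \<noteq> (0,0)" and z: "z \<in> fst ` P"
  show "z \<in> {(0,0), fst g0}"
  proof (rule ccontr)
    assume "z \<notin> {(0,0), fst g0}"
    then have "z \<noteq> \<one>\<^bsub>ZZ\<^esub>" "fst g0 \<noteq> \<one>\<^bsub>ZZ\<^esub>" "z \<noteq> fst g0" using a(4) by simp_all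
    moreover have "z \<in> carrier ZZ" "fst g0 \<in> carrier ZZ" using z a(3) fst_sub[OF a(1)] by blast+
    moreover have "fst g0 \<in> fst ` P" using a(3) by blast
    ultimately have "generate ZZ (fst ` P) = carrier ZZ" using ZZ_gen[of z "fst g0" "fst ` P"] z fst_sub[OF a(1)] by blast
    then show False using a(2) unfolding Zc_def by blast
  qed
qed

lemma notZc_of_sub: "fst ` P \<subseteq> {(0,0), z0} \<Longrightarrow> z0 \<in> carrier ZZ \<Longrightarrow> \<not> Zc P"
  using ZZ_not_gen[of "fst ` P" z0] unfolding Zc_def by simp

lemma not_trm_Z: "P \<subseteq> carrier GG \<Longrightarrow> fst ` P \<subseteq> {(0,0), z0} \<Longrightarrow> z0 \<in> carrier ZZ \<Longrightarrow> \<not> trm P"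
  using notZc_of_sub term_Zc by blast

lemma not_trm_H: "P \<subseteq> carrier GG \<Longrightarrow> \<not> Hc P \<Longrightarrow> \<not> trm P"
  using term_Hc by blast

lemma term_move:
  assumes P: "P \<subseteq> carrier GG" and nt: "\<not> trm P" and g0: "g0 \<in> P" "fst g0 \<noteq> (0,0)" and t: "tt P"
  shows "\<exists>g \<in> carrier GG - P. trm (insert g P)"
proof -
  obtain h where h: "h \<in> carrier H" "generate H (insert h (snd ` P)) = carrier H" using t unfolding tt_def by blast
  have z0c: "fst g0 \<in> carrier ZZ" using g0 fst_sub[OF P] by blast
  obtain z' where z': "z' \<in> carrier ZZ" "z' \<noteq> (0,0)" "z' \<noteq> fst g0" using ZZ_other[OF z0c] by blast
  have gc: "(z',h) \<in> carrier GG" using z' h by simp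
  have Zc': "Zc (insert (z',h) P)"
    unfolding Zc_def
    apply (rule ZZ_gen[of z' "fst g0"])
    using z' z0c g0 fst_sub[OF P] by auto
  have Hc': "Hc (insert (z',h) P)" unfolding Hc_def using h(2) by simp
  have notin: "(z',h) \<notin> P"
  proof
    assume "(z',h) \<in> P"
    then have "insert (z',h) P = P" by blast
    then have "trm P" using term_suff[OF P] Zc' Hc' by simp
    then show False using nt by simp
  qed
  have "trm (insert (z',h) P)" using term_suff Zc' Hc' P gc by blast
  then show ?thesis using gc notin by blast
qed

lemma pad1:
  assumes P: "P \<subseteq> carrier GG" and odd: "odd (card P)"
  shows "\<exists>g \<in> carrier GG - P. snd g \<in> generate H (snd ` P)"
proof (rule ccontr)
  assume na: "\<not> ?thesis"
  let ?K = "generate H (snd ` P)"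
  let ?S = "carrier ZZ \<times> ?K"
  have Ksub: "?K \<subseteq> carrier H" using genH_sub[OF snd_sub[OF P]] .
  have finK: "finite ?K" using Ksub finH finite_subset by blast
  have PS: "P \<subseteq> ?S"
  proof
    fix p assume p: "p \<in> P"
    have "fst p \<in> carrier ZZ" using p fst_sub[OF P] by blast
    moreover have "snd p \<in> ?K" using p generate.incl[of "snd p" "snd ` P" H] by blast
    ultimately show "p \<in> ?S" by (cases p) simp
  qed
  have SG: "?S \<subseteq> carrier GG" using Ksub by auto
  have "?S \<subseteq> P"
  proof
    fix s assume s: "s \<in> ?S"
    show "s \<in> P"
    proof (rule ccontr)
      assume "s \<notin> P"
      then have "s \<in> carrier GG - P" using s SG by blast
      moreover have "snd s \<in> ?K" using s by (cases s) simp
      ultimately show False using na by blast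
    qed
  qed
  then have "P = ?S" using PS by blast
  then have "card P = 4 * card ?K" using card_cartesian_product[of "carrier ZZ" ?K] card_ZZ by simp
  then show False using odd by simp
qed

lemma same_K:
  assumes P: "P \<subseteq> carrier GG" and g: "g \<in> carrier GG" and k: "snd g \<in> generate H (snd ` P)"
  shows "generate H (snd ` insert g P) = generate H (snd ` P)" "tt (insert g P) \<longleftrightarrow> tt P"
proof -
  have S: "snd ` P \<subseteq> carrier H" by (rule snd_sub[OF P])
  show "generate H (snd ` insert g P) = generate H (snd ` P)"
    using genH_absorb[OF k S] by simp
  have "\<And>h. h \<in> carrier H \<Longrightarrow> generate H (insert h (snd ` insert g P)) = generate H (insert h (snd ` P))"
  proof -
    fix h assume h: "h \<in> carrier H"
    have S': "insert h (snd ` P) \<subseteq> carrier H" using h S by blast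
    have "snd g \<in> generate H (insert h (snd ` P))"
      using group.mono_generate[OF grpH, of "snd ` P" "insert h (snd ` P)"] k by blast
    then have "generate H (insert (snd g) (insert h (snd ` P))) = generate H (insert h (snd ` P))"
      using genH_absorb S' by blast
    then show "generate H (insert h (snd ` insert g P)) = generate H (insert h (snd ` P))"
      by (simp add: insert_commute)
  qed
  then show "tt (insert g P) \<longleftrightarrow> tt P" unfolding tt_def by auto
qed

lemma pad2:
  assumes P: "P \<subseteq> carrier GG" and g0: "g0 \<in> P" "fst g0 \<noteq> (0,0)"
    and sub: "fst ` P \<subseteq> {(0,0), fst g0}" and odd: "odd (card P)"
  shows "\<exists>g \<in> carrier GG - P. fst g \<in> {(0,0), fst g0}"
proof (rule ccontr)
  assume na: "\<not> ?thesis"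
  let ?S = "{(0,0), fst g0} \<times> carrier H"
  have z0c: "fst g0 \<in> carrier ZZ" using g0 fst_sub[OF P] by blast
  have PS: "P \<subseteq> ?S"
  proof
    fix p assume p: "p \<in> P"
    have "fst p \<in> {(0,0), fst g0}" using p sub by blast
    moreover have "snd p \<in> carrier H" using p snd_sub[OF P] by blast
    ultimately show "p \<in> ?S" by (cases p) simp
  qed
  have SG: "?S \<subseteq> carrier GG" using z0c zeroZ by auto
  have "?S \<subseteq> P"
  proof
    fix s assume s: "s \<in> ?S"
    show "s \<in> P"
    proof (rule ccontr)
      assume "s \<notin> P"
      then have "s \<in> carrier GG - P" using s SG by blast
      moreover have "fst s \<in> {(0,0), fst g0}" using s by (cases s) simp
      ultimately show False using na by blast
    qed
  qed
  then have "P = ?S" using PS by blast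
  moreover have "card {(0::int,0::int), fst g0} = 2" using g0(2) by simp
  ultimately have "card P = 2 * card (carrier H)" using card_cartesian_product[of "{(0::int,0::int), fst g0}" "carrier H"] by simp
  then show False using odd by simp
qed

lemma xmove:
  assumes P: "P \<subseteq> carrier GG" and nt: "\<not> tt P"
  shows "((0,0), x) \<in> carrier GG - P" "\<not> Hc (insert ((0,0),x) P)" "tt (insert ((0,0),x) P)"
proof -
  have S: "snd ` P \<subseteq> carrier H" by (rule snd_sub[OF P])
  show "((0,0), x) \<in> carrier GG - P"
  proof -
    have "((0,0), x) \<notin> P"
    proof
      assume "((0,0), x) \<in> P"
      then have xin: "x \<in> snd ` P" by force
      have S': "insert y (snd ` P) \<subseteq> carrier H" using S yH by blast
      have "x \<in> generate H (insert y (snd ` P))" by (rule generate.incl) (simp add: xin)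
      moreover have "y \<in> generate H (insert y (snd ` P))" by (rule generate.incl) simp
      ultimately have "generate H (insert y (snd ` P)) = carrier H" using genH_xy S' by blast
      then show False using nt yH unfolding tt_def by blast
    qed
    then show ?thesis using xH zeroZ by simp
  qed
  show "\<not> Hc (insert ((0,0),x) P)"
  proof
    assume "Hc (insert ((0,0),x) P)"
    then have "generate H (insert x (snd ` P)) = carrier H" unfolding Hc_def by simp
    then show False using nt xH unfolding tt_def by blast
  qed
  have S': "insert y (insert x (snd ` P)) \<subseteq> carrier H" using S xH yH by blast
  have "x \<in> generate H (insert y (insert x (snd ` P)))" by (rule generate.incl) simp
  moreover have "y \<in> generate H (insert y (insert x (snd ` P)))" by (rule generate.incl) simp
  ultimately have "generate H (insert y (insert x (snd ` P))) = carrier H"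
    using genH_xy[OF _ _ S'] by blast
  then have "generate H (insert y (snd ` insert ((0,0),x) P)) = carrier H" by simp
  then show "tt (insert ((0,0),x) P)" unfolding tt_def using yH by blast
qed

end

context gsetup begin

lemma card_less_ins: "g \<in> carrier GG - P \<Longrightarrow> card (carrier GG - insert g P) < card (carrier GG - P)"
proof -
  assume g: "g \<in> carrier GG - P"
  have "carrier GG - insert g P = (carrier GG - P) - {g}" by blast
  moreover have "card ((carrier GG - P) - {g}) < card (carrier GG - P)"
    by (rule card_Diff1_less) (use finG g in auto)
  ultimately show ?thesis by simp
qed

lemma T12:
  assumes "P \<subseteq> carrier GG" "\<not> trm P" "nonone P"
  shows "gen_nim GG P = (if odd (card P) then 2 else if tt P then 1 else 0)"
  using assms
proof (induction "card (carrier GG - P)" arbitrary: P rule: less_induct)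
  case less
  note P = less.prems(1) and nt = less.prems(2) and nn = less.prems(3)
  define f where "f = (\<lambda>g. gen_nim GG (insert g P))"
  have nimP: "gen_nim GG P = mex (f ` (carrier GG - P))" unfolding f_def by (rule nim_eq[OF P nt])
  have finP: "finite P" by (rule finP[OF P])
  obtain g0 where g0: "g0 \<in> P" "fst g0 \<noteq> (0,0)" using nn unfolding nonone_def by blast
  have opt: "\<And>g. g \<in> carrier GG - P \<Longrightarrow> f g = (if trm (insert g P) then 0
      else if odd (card P) then (if tt (insert g P) then 1 else 0) else 2)"
  proof -
    fix g assume g: "g \<in> carrier GG - P"
    have Pi: "insert g P \<subseteq> carrier GG" using g P by blast
    have ci: "card (insert g P) = Suc (card P)" using g finP by simp
    show "f g = (if trm (insert g P) then 0
      else if odd (card P) then (if tt (insert g P) then 1 else 0) else 2)"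
    proof (cases "trm (insert g P)")
      case True then show ?thesis unfolding f_def using nim_term[OF Pi] by simp
    next
      case False
      have nn': "nonone (insert g P)" using nn unfolding nonone_def by blast
      have "gen_nim GG (insert g P) = (if odd (card (insert g P)) then 2 else if tt (insert g P) then 1 else 0)"
        using less.hyps[OF card_less_ins[OF g] Pi False nn'] .
      then show ?thesis unfolding f_def using False ci by simp
    qed
  qed
  have fin: "finite (f ` (carrier GG - P))" using finG by simp
  show ?case
  proof (cases "odd (card P)")
    case False
    have vals: "\<And>g. g \<in> carrier GG - P \<Longrightarrow> f g = (if trm (insert g P) then 0 else 2)"
      using opt False by simp
    show ?thesis
    proof (cases "tt P")
      case True
      obtain g where g: "g \<in> carrier GG - P" "trm (insert g P)" using term_move[OF P nt g0 True] by blast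
      have "0 \<in> f ` (carrier GG - P)" using g vals by force
      moreover have "1 \<notin> f ` (carrier GG - P)"
      proof
        assume "1 \<in> f ` (carrier GG - P)"
        then obtain g where g: "g \<in> carrier GG - P" "f g = 1" by force
        then show False using vals[OF g(1)] by (simp split: if_splits)
      qed
      ultimately show ?thesis using nimP False True mex_1 by simp
    next
      case tF: False
      have "0 \<notin> f ` (carrier GG - P)"
      proof
        assume "0 \<in> f ` (carrier GG - P)"
        then obtain g where g: "g \<in> carrier GG - P" "f g = 0" by force
        then have "trm (insert g P)" using vals by (simp split: if_splits)
        then show False using tt_of_trm[of g P] g P tF by blast
      qed
      then show ?thesis using nimP False tF mex_0 by simp
    qed
  next
    case True
    have vals: "\<And>g. g \<in> carrier GG - P \<Longrightarrow> f g = (if trm (insert g P) then 0 else if tt (insert g P) then 1 else 0)"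
      using opt True by simp
    have n2: "2 \<notin> f ` (carrier GG - P)"
    proof
      assume "2 \<in> f ` (carrier GG - P)"
      then obtain g where g: "g \<in> carrier GG - P" "f g = 2" by force
      then show False using vals[OF g(1)] by (simp split: if_splits)
    qed
    have v1: "\<And>g. g \<in> carrier GG - P \<Longrightarrow> \<not> trm (insert g P) \<Longrightarrow> tt (insert g P) \<Longrightarrow> 1 \<in> f ` (carrier GG - P)"
      using vals by (metis image_eqI)
    have v0: "\<And>g. g \<in> carrier GG - P \<Longrightarrow> \<not> tt (insert g P) \<Longrightarrow> 0 \<in> f ` (carrier GG - P)"
      using vals by (metis image_eqI)
    have v0t: "\<And>g. g \<in> carrier GG - P \<Longrightarrow> trm (insert g P) \<Longrightarrow> 0 \<in> f ` (carrier GG - P)"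
      using vals by (metis image_eqI)
    have both: "0 \<in> f ` (carrier GG - P) \<and> 1 \<in> f ` (carrier GG - P)"
    proof (cases "Hc P")
      case True
      have tP: "tt P" by (rule Hc_tt[OF P True])
      have "\<not> Zc P" using nt term_suff[OF P] True by blast
      then have sub: "fst ` P \<subseteq> {(0,0), fst g0}" using notZc_sub[OF P _ g0] by blast
      obtain g where g: "g \<in> carrier GG - P" "fst g \<in> {(0,0), fst g0}"
        using pad2[OF P g0 sub \<open>odd (card P)\<close>] by blast
      have Pi: "insert g P \<subseteq> carrier GG" using g P by blast
      have z0c: "fst g0 \<in> carrier ZZ" using g0 fst_sub[OF P] by blast
      have "fst ` insert g P \<subseteq> {(0,0), fst g0}" using sub g by auto
      then have ntg: "\<not> trm (insert g P)" using not_trm_Z[OF Pi _ z0c] by blast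
      have "tt (insert g P)" using tt_mono[OF _ Pi tP] by blast
      then have "1 \<in> f ` (carrier GG - P)" using v1 g ntg by blast
      moreover obtain g' where "g' \<in> carrier GG - P" "trm (insert g' P)" using term_move[OF P nt g0 tP] by blast
      ultimately show ?thesis using v0t by blast
    next
      case False
      obtain g where g: "g \<in> carrier GG - P" "snd g \<in> generate H (snd ` P)"
        using pad1[OF P \<open>odd (card P)\<close>] by blast
      have gc: "g \<in> carrier GG" using g by blast
      have Pi: "insert g P \<subseteq> carrier GG" using g P by blast
      have "\<not> Hc (insert g P)" using same_K(1)[OF P gc g(2)] False unfolding Hc_def by simp
      then have ntg: "\<not> trm (insert g P)" using not_trm_H[OF Pi] by blast
      have tteq: "tt (insert g P) \<longleftrightarrow> tt P" using same_K(2)[OF P gc g(2)] .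
      show ?thesis
      proof (cases "tt P")
        case True
        have "1 \<in> f ` (carrier GG - P)" using v1 g(1) ntg tteq True by blast
        moreover obtain g' where "g' \<in> carrier GG - P" "trm (insert g' P)" using term_move[OF P nt g0 True] by blast
        ultimately show ?thesis using v0t by blast
      next
        case tF: False
        have "0 \<in> f ` (carrier GG - P)" using v0 g(1) tteq tF by blast
        moreover
        have xm: "((0,0), x) \<in> carrier GG - P" "\<not> Hc (insert ((0,0),x) P)" "tt (insert ((0,0),x) P)"
          using xmove[OF P tF] by blast+
        have "insert ((0,0),x) P \<subseteq> carrier GG" using xm(1) P by blast
        then have "\<not> trm (insert ((0,0),x) P)" using not_trm_H xm(2) by blast
        then have "1 \<in> f ` (carrier GG - P)" using v1 xm(1,3) by blast
        ultimately show ?thesis by blast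
      qed
    qed
    then show ?thesis using nimP True n2 mex_2 by simp
  qed
qed

end

context gsetup begin

lemma T0:
  assumes "P \<subseteq> carrier GG" "fst ` P \<subseteq> {(0,0)}" "tt P"
  shows "gen_nim GG P = (if odd (card P) then 0 else 1)"
  using assms
proof (induction "card (carrier GG - P)" arbitrary: P rule: less_induct)
  case less
  note P = less.prems(1) and z = less.prems(2) and tP = less.prems(3)
  have nt: "\<not> trm P" using not_trm_Z[OF P _ zeroZ] z by simp
  define f where "f = (\<lambda>g. gen_nim GG (insert g P))"
  have nimP: "gen_nim GG P = mex (f ` (carrier GG - P))" unfolding f_def by (rule nim_eq[OF P nt])
  have finP: "finite P" by (rule finP[OF P])
  have opt: "\<And>g. g \<in> carrier GG - P \<Longrightarrow> f g = (if odd (card P) then 1 else if fst g = (0,0) then 0 else 2)"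
  proof -
    fix g assume g: "g \<in> carrier GG - P"
    have Pi: "insert g P \<subseteq> carrier GG" using g P by blast
    have ci: "card (insert g P) = Suc (card P)" using g finP by simp
    have tQ: "tt (insert g P)" using tt_mono[OF _ Pi tP] by blast
    show "f g = (if odd (card P) then 1 else if fst g = (0,0) then 0 else 2)"
    proof (cases "fst g = (0,0)")
      case True
      have "fst ` insert g P \<subseteq> {(0,0)}" using z True by auto
      then have "gen_nim GG (insert g P) = (if odd (card (insert g P)) then 0 else 1)"
        by (rule less.hyps[OF card_less_ins[OF g] Pi _ tQ])
      then show ?thesis unfolding f_def using True ci by simp
    next
      case False
      have gz: "fst g \<in> carrier ZZ" using g carrGG by blast
      have "fst ` insert g P \<subseteq> {(0,0), fst g}" using z by auto
      then have ntg: "\<not> trm (insert g P)" using not_trm_Z[OF Pi _ gz] by blast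
      have nn: "nonone (insert g P)" unfolding nonone_def using False by blast
      have "gen_nim GG (insert g P) = (if odd (card (insert g P)) then 2 else if tt (insert g P) then 1 else 0)"
        using T12[OF Pi ntg nn] .
      then show ?thesis unfolding f_def using False ci tQ by simp
    qed
  qed
  show ?case
  proof (cases "odd (card P)")
    case True
    have "0 \<notin> f ` (carrier GG - P)"
    proof
      assume "0 \<in> f ` (carrier GG - P)"
      then obtain g where g: "g \<in> carrier GG - P" "f g = 0" by force
      then show False using opt[OF g(1)] True by simp
    qed
    then show ?thesis using nimP True mex_0 by simp
  next
    case False
    have n1: "1 \<notin> f ` (carrier GG - P)"
    proof
      assume "1 \<in> f ` (carrier GG - P)"
      then obtain g where g: "g \<in> carrier GG - P" "f g = 1" by force
      have "f g = (if fst g = (0,0) then 0 else 2)" using opt[OF g(1)] False by simp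
      then have "f g \<noteq> 1" by simp
      then show False using g(2) by simp
    qed
    obtain h where h: "h \<in> carrier H" "((0,0), h) \<notin> P"
    proof (rule ccontr)
      assume na: "\<not> thesis"
      have "P = {((0::int),(0::int))} \<times> carrier H"
      proof
        show "P \<subseteq> {((0::int),(0::int))} \<times> carrier H"
        proof
          fix p assume p: "p \<in> P"
          then have "fst p = (0,0)" using z by blast
          moreover have "snd p \<in> carrier H" using p snd_sub[OF P] by blast
          ultimately show "p \<in> {((0::int),(0::int))} \<times> carrier H" by (cases p) simp
        qed
        show "{((0::int),(0::int))} \<times> carrier H \<subseteq> P"
        proof
          fix p assume p: "p \<in> {((0::int),(0::int))} \<times> carrier H"
          then obtain h where ph: "p = ((0,0),h)" "h \<in> carrier H" by blast
          show "p \<in> P"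
          proof (rule ccontr)
            assume "p \<notin> P"
            then show False using na that[OF ph(2)] ph(1) by blast
          qed
        qed
      qed
      then have "card P = card (carrier H)" by (simp add: card_cartesian_product)
      then show False using False oddH by simp
    qed
    have "((0,0),h) \<in> carrier GG - P" using h zeroZ by simp
    then have "f ((0,0),h) = 0" "((0,0),h) \<in> carrier GG - P" using opt False by simp_all
    then have "0 \<in> f ` (carrier GG - P)" by (metis image_eqI)
    then show ?thesis using nimP False n1 mex_1 by simp
  qed
qed

lemma main: "gen_nim GG {} = 1"
proof -
  have nt: "\<not> trm {}" using not_trm_Z[of "{}" "(0,0)"] zeroZ by simp
  define f where "f = (\<lambda>g. gen_nim GG (insert g {}))"
  have nimP: "gen_nim GG {} = mex (f ` (carrier GG - {}))" unfolding f_def by (rule nim_eq) (use nt in auto)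
  have gx: "((0,0), x) \<in> carrier GG" using zeroZ xH by simp
  have ttx: "tt {((0,0), x)}"
  proof -
    have S: "{y, x} \<subseteq> carrier H" using xH yH by simp
    have "x \<in> generate H {y,x}" "y \<in> generate H {y,x}" by (rule generate.incl, simp)+
    then have "generate H {y, x} = carrier H" using genH_xy[OF _ _ S] by blast
    then show ?thesis unfolding tt_def using yH by auto
  qed
  have "f ((0,0), x) = 0" unfolding f_def using T0[of "{((0,0), x)}"] gx ttx by simp
  then have z0: "0 \<in> f ` (carrier GG - {})" using gx by force
  have n1: "1 \<notin> f ` (carrier GG - {})"
  proof
    assume "1 \<in> f ` (carrier GG - {})"
    then obtain g where g0: "g \<in> carrier GG - {}" "1 = f g" by (rule imageE)
    have g: "g \<in> carrier GG" "f g = 1" using g0 by simp_all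
    have gs: "{g} \<subseteq> carrier GG" using g by simp
    have gz: "fst g \<in> carrier ZZ" using g carrGG by blast
    show False
    proof (cases "fst g = (0,0)")
      case False
      have "fst ` {g} \<subseteq> {(0,0), fst g}" by simp
      then have ntg: "\<not> trm {g}" by (rule not_trm_Z[OF gs _ gz])
      have nng: "nonone {g}" unfolding nonone_def using False by simp
      have "gen_nim GG {g} = (if odd (card {g}) then 2 else if tt {g} then 1 else 0)"
        by (rule T12[OF gs ntg nng])
      then have "gen_nim GG {g} = 2" by simp
      then show False using g(2) unfolding f_def by simp
    next
      case True
      have "fst ` {g} \<subseteq> {(0,0), (0,0)}" using True by simp
      then have ntg: "\<not> trm {g}" by (rule not_trm_Z[OF gs _ zeroZ])
      define g' where "g' = (((1::int),(0::int)), x)"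
      have g'c: "g' \<in> carrier GG" using xH unfolding g'_def by (simp add: carrier_Z2)
      have g'n: "g' \<noteq> g" using True unfolding g'_def by (cases g) simp
      have Qs: "insert g' {g} \<subseteq> carrier GG" using g'c gs by blast
      have "fst ` insert g' {g} \<subseteq> {(0,0), (1,0)}" using True unfolding g'_def by simp
      moreover have "(1,0) \<in> carrier ZZ" by (simp add: carrier_Z2)
      ultimately have ntQ: "\<not> trm (insert g' {g})" by (rule not_trm_Z[OF Qs])
      have nnQ: "nonone (insert g' {g})" unfolding nonone_def g'_def by simp
      have cQ: "card (insert g' {g}) = 2" using g'n by simp
      have sgH: "snd g \<in> carrier H" using carrGG[OF g(1)] by blast
      have ttQ: "tt (insert g' {g})"
      proof -
        have sn: "snd ` insert g' {g} = {x, snd g}" unfolding g'_def by simp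
        have S: "insert y {x, snd g} \<subseteq> carrier H" using yH xH sgH by simp
        have "x \<in> generate H (insert y {x, snd g})" by (rule generate.incl) simp
        moreover have "y \<in> generate H (insert y {x, snd g})" by (rule generate.incl) simp
        ultimately have "generate H (insert y {x, snd g}) = carrier H" by (rule genH_xy[OF _ _ S])
        then show ?thesis unfolding tt_def sn using yH by blast
      qed
      have "gen_nim GG (insert g' {g}) = (if odd (card (insert g' {g})) then 2 else if tt (insert g' {g}) then 1 else 0)"
        by (rule T12[OF Qs ntQ nnQ])
      then have v1: "gen_nim GG (insert g' {g}) = 1" using cQ ttQ by simp
      let ?F = "(\<lambda>h. gen_nim GG (insert h {g})) ` (carrier GG - {g})"
      have eq: "gen_nim GG {g} = mex ?F" by (rule nim_eq[OF gs ntg])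
      have g'in: "g' \<in> carrier GG - {g}" using g'c g'n by simp
      have "gen_nim GG (insert g' {g}) \<in> ?F" by (rule imageI[OF g'in])
      then have in1: "1 \<in> ?F" using v1 by simp
      have fin: "finite ?F" using finG by simp
      have "mex ?F \<noteq> 1" by (rule mex_not[OF fin in1])
      then have "gen_nim GG {g} \<noteq> 1" using eq by simp
      then show False using g(2) unfolding f_def by simp
    qed
  qed
  show ?thesis using nimP z0 n1 mex_1 by simp
qed

end

theorem proposition4p11:
  fixes H :: "('a, 'b) monoid_scheme"
  assumes "group H" and "finite (carrier H)" and "odd (order H)" and "min_gens H = 2"
  shows "GEN_value (DirProd (DirProd (integer_mod_group 2) (integer_mod_group 2)) H) = 1"
proof -
  let ?Q = "\<lambda>n. \<exists>S. S \<subseteq> carrier H \<and> finite S \<and> card S = n \<and> generate H S = carrier H"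
  have g1: "generate H (carrier H) \<subseteq> carrier H" by (rule group.generate_incl[OF assms(1)]) simp
  have g2: "carrier H \<subseteq> generate H (carrier H)" using generate.incl[of _ "carrier H" H] by (rule subsetI)
  have gen: "generate H (carrier H) = carrier H" using g1 g2 by (rule equalityI)
  have "?Q (card (carrier H))" using assms(2) gen by blast
  then have "?Q (LEAST n. ?Q n)" by (rule LeastI)
  moreover have "(LEAST n. ?Q n) = 2" using assms(4) unfolding min_gens_def .
  ultimately have "?Q 2" by simp
  then obtain S where S: "S \<subseteq> carrier H" "card S = 2" "generate H S = carrier H" by blast
  then obtain x y where xy: "S = {x,y}" using card_2_iff by metis
  have xH: "x \<in> carrier H" and yH: "y \<in> carrier H" using S(1) xy by simp_all
  have gxy: "generate H {x,y} = carrier H" using S(3) xy by simp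
  have oH: "odd (card (carrier H))" using assms(3) unfolding order_def .
  interpret gsetup H x y by (rule gsetup.intro[OF assms(1,2) oH xH yH gxy])
  show ?thesis unfolding GEN_value_def by (rule main)
qed

end
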